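(* There exists a family of integers $\beta_{(j_1,\ldots,j_s)}(n_1,\ldots,n_k)$, indexed by integers $k\ge2$, integers $n_1,\ldots,n_k\ge 2$, $1\le s\le k-1$ and $1\le j_1<\cdots<j_s\le k$, such that for every $r\ge1$ and all integers $m_1,\ldots,m_r\ge 2$ $$H_{(m_1,\ldots,m_r)}=m_1m_2^2\cdots m_r^r\,h_r-\sum_{s=1}^{r-1}\ \sum_{1\le j_1<\cdots<j_s\le r}\beta_{(j_1,\ldots,j_s)}(m_1,\ldots,m_r)\,H_{(m_{j_1},\ldots,m_{j_s})},$$ and such that for every $r\ge 2$, all $m_1,\ldots,m_r\ge2$, $1\le s\le r-1$ and $1\le j_1<\cdots<j_s\le r$ the following relations hold (writing $C_{r,i}:=\prod_{j=1}^{r-i-1}m_j^{\,j}\prod_{j=r-i}^{r-1}m_j^{\,r-i-1}$, and interpreting any $\beta$ having a nonpositive entry in its index tuple as $0$): (i) if $j_s=r$: for $s\ge2$, $\beta_{(j_1,\ldots,j_{s-1},r)}(m_1,\ldots,m_r)=\beta_{(j_1,\ldots,j_{s-1})}(m_1,\ldots,m_{r-1})$, and for $s=1$, $\beta_{(r)}(m_1,\ldots,m_r)=0$; (ii) if $(j_1,\ldots,j_s)=(r-s,r-s+1,\ldots,r-1)$: $$\beta_{(r-s,\ldots,r-1)}(m_1,\ldots,m_r)=-\Big[C_{r,s}\,\alpha_{m_r,r}(s)+\sum_{i=s+1}^{r-1}C_{r,i}\,\alpha_{m_r,r}(i)\,\beta_{(i-s+1,\ldots,i)}(m_{r-i},\ldots,m_{r-1})\Big];$$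 (iii) otherwise: $$\beta_{(j_1,\ldots,j_s)}(m_1,\ldots,m_r)=-\sum_{i=s+1}^{r-1}C_{r,i}\,\alpha_{m_r,r}(i)\,\beta_{(j_1-(r-i)+1,\ldots,j_s-(r-i)+1)}(m_{r-i},\ldots,m_{r-1}).$$
   Context: For integers $m\ge2$, $r\ge1$, the numbers $\alpha_{m,r}(1),\ldots,\alpha_{m,r}(r)$ are the unique integers such that $\binom{mn+r-1}{r}=\sum_{i=1}^{r}\alpha_{m,r}(i)\binom{n+i-1}{i}$ for all positive integers $n$. For $r\ge0$, $h_r(q):=q/(1-q)^{r+1}$. For $m\ge2$, $U_m$ is the linear operator on $\mathbb{Z}[[q]]$ given by $U_m\big(\sum_{n\ge0}a(n)q^n\big)=\sum_{n\ge0}a(mn)q^n$. For a finite sequence of integers $\ge 2$ define power series recursively: $H_{\emptyset}:=q/(1-q)$, and $H_{(m_1,\ldots,m_r)}:=U_{m_r}\Big(\frac{1}{1-q}H_{(m_1,\ldots,m_{r-1})}\Big)$ for $r\ge1$. Empty sums are $0$ and empty products are $1$. *)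

theory Defs
  imports "HOL-Computational_Algebra.Formal_Power_Series"
begin

text \<open>alpha m r i: the unique integers with
  binom(mn+r-1, r) = sum_{i=1}^r alpha(i) binom(n+i-1, i) for all n >= 1
  (normalised to be 0 outside 1..r, to make them unique as a function).\<close>
definition alpha :: "nat \<Rightarrow> nat \<Rightarrow> nat \<Rightarrow> int" where
  "alpha m r = (THE a. (\<forall>i. i \<notin> {1..r} \<longrightarrow> a i = 0) \<and>
      (\<forall>n\<ge>1. int ((m * n + r - 1) choose r) =
              (\<Sum>i=1..r. a i * int ((n + i - 1) choose i))))"

definition geom :: "int fps" where
  "geom = Abs_fps (\<lambda>_. 1)"

lemma geom_inverse: "(1 - fps_X) * geom = 1"
proof (rule fps_ext)
  fix n show "fps_nth ((1 - fps_X) * geom) n = fps_nth (1::int fps) n"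
    by (cases n) (simp_all add: geom_def algebra_simps fps_X_mult_nth)
qed

definition h :: "nat \<Rightarrow> int fps" where
  "h r = fps_X * geom ^ (r + 1)"

definition U :: "nat \<Rightarrow> int fps \<Rightarrow> int fps" where
  "U m f = Abs_fps (\<lambda>n. fps_nth f (m * n))"

definition H :: "nat list \<Rightarrow> int fps" where
  "H ms = foldl (\<lambda>acc m. U m (geom * acc)) (fps_X * geom) ms"

definition C :: "nat list \<Rightarrow> nat \<Rightarrow> nat \<Rightarrow> int" where
  "C ms r i = (\<Prod>j=1..r-i-1. int (ms ! (j - 1)) ^ j) *
              (\<Prod>j=r-i..r-1. int (ms ! (j - 1)) ^ (r - i - 1))"

definition beta0 :: "(int list \<Rightarrow> nat list \<Rightarrow> int) \<Rightarrow> int list \<Rightarrow> nat list \<Rightarrow> int" where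
  "beta0 \<beta> J ms = (if (\<exists>j\<in>set J. j \<le> 0) then 0 else \<beta> J ms)"

end

theory Submission
  imports Defs
begin


definition bb :: "nat \<Rightarrow> nat \<Rightarrow> int" where
  "bb i n = int ((n + i - 1) choose i)"

lemma bb_0 [simp]: "bb 0 n = 1"
  by (simp add: bb_def)

lemma bb_Suc_0 [simp]: "bb (Suc i) 0 = 0"
  by (simp add: bb_def)

lemma bb_pascal: "bb (Suc i) (Suc n) = bb (Suc i) n + bb i (Suc n)"
proof -
  have "bb (Suc i) (Suc n) = int (Suc (n + i) choose Suc i)" by (simp add: bb_def)
  also have "\<dots> = int ((n + i) choose i) + int ((n+i) choose Suc i)" by simp
  finally show ?thesis by (simp add: bb_def add.commute)
qed

lemma bb_diff: "n \<ge> 1 \<Longrightarrow> bb (Suc i) n - bb (Suc i) (n - 1) = bb i n"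
  using bb_pascal[of i "n - 1"] by simp

lemma bb_shift: "n \<ge> 1 \<Longrightarrow> bb (Suc i) (n - 1) = bb (Suc i) n - bb i n"
  using bb_pascal[of i "n - 1"] by simp

definition repA :: "nat \<Rightarrow> int \<Rightarrow> (nat \<Rightarrow> int) \<Rightarrow> bool" where
  "repA k t f \<longleftrightarrow> (\<exists>c. c k = t \<and> (\<forall>n. f n = (\<Sum>i\<le>k. c i * bb i n)))"

definition rep1 :: "nat \<Rightarrow> int \<Rightarrow> (nat \<Rightarrow> int) \<Rightarrow> bool" where
  "rep1 k t f \<longleftrightarrow> (\<exists>c. c k = t \<and> (\<forall>n\<ge>1. f n = (\<Sum>i\<le>k. c i * bb i n)))"

lemma rep1_add:
  assumes "rep1 k t f" "rep1 k u g"
  shows "rep1 k (t + u) (\<lambda>n. f n + g n)"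
proof -
  obtain c where c: "c k = t" "\<forall>n\<ge>1. f n = (\<Sum>i\<le>k. c i * bb i n)"
    using assms(1) rep1_def by auto
  obtain d where d: "d k = u" "\<forall>n\<ge>1. g n = (\<Sum>i\<le>k. d i * bb i n)"
    using assms(2) rep1_def by auto
  show ?thesis unfolding rep1_def
    by (rule exI[of _ "\<lambda>i. c i + d i"])
       (use c d in \<open>auto simp: algebra_simps sum.distrib\<close>)
qed

lemma rep1_zero: "rep1 k 0 (\<lambda>n. 0)"
  unfolding rep1_def by (rule exI[of _ "\<lambda>i. 0"]) simp

lemma rep1_scale:
  assumes "rep1 k t f"
  shows "rep1 k (a * t) (\<lambda>n. a * f n)"
proof -
  obtain c where c: "c k = t" "\<forall>n\<ge>1. f n = (\<Sum>i\<le>k. c i * bb i n)"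
    using assms(1) rep1_def by auto
  show ?thesis unfolding rep1_def
    by (rule exI[of _ "\<lambda>i. a * c i"])
       (use c in \<open>auto simp: algebra_simps sum_distrib_left\<close>)
qed

lemma rep1_sum:
  assumes "finite S" "\<And>x. x \<in> S \<Longrightarrow> rep1 k (t x) (f x)"
  shows "rep1 k (\<Sum>x\<in>S. t x) (\<lambda>n. \<Sum>x\<in>S. f x n)"
  using assms
proof (induction S rule: finite_induct)
  case empty
  then show ?case using rep1_zero by simp
next
  case (insert x F)
  then show ?case using rep1_add[of k "t x" "f x" "sum t F" "\<lambda>n. \<Sum>x\<in>F. f x n"] by simp
qed

lemma rep1_ext:
  assumes "rep1 k t f" "\<And>n. n \<ge> 1 \<Longrightarrow> g n = f n"
  shows "rep1 k t g"
  using assms unfolding rep1_def by auto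

lemma rep1_bb:
  assumes "i \<le> k"
  shows "rep1 k (if i = k then 1 else 0) (bb i)"
  unfolding rep1_def
proof (rule exI[of _ "\<lambda>j. if j = i then 1 else 0"], intro conjI allI impI)
  fix n :: nat
  have "(\<Sum>j\<le>k. (if j = i then 1 else 0) * bb j n) = (\<Sum>j\<le>k. if j = i then bb j n else 0)"
    by (rule sum.cong) auto
  also have "\<dots> = bb i n" using assms by (simp add: sum.delta)
  finally show "bb i n = (\<Sum>j\<le>k. (if j = i then 1 else 0) * bb j n)" by simp
qed simp

lemma rep1_bb_shift:
  assumes "i \<le> k"
  shows "rep1 k (if i = k then 1 else 0) (\<lambda>n. bb i (n - 1))"
proof (cases i)
  case 0
  show ?thesis unfolding 0 by (rule rep1_ext[OF rep1_bb[of 0 k]]) auto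
next
  case (Suc j)
  have "rep1 k ((if i = k then 1 else 0) + (-1) * (if j = k then 1 else 0))
           (\<lambda>n. bb i n + (-1) * bb j n)"
    by (rule rep1_add[OF rep1_bb[OF assms] rep1_scale[OF rep1_bb]]) (use Suc assms in auto)
  moreover have "(if i = k then 1 else 0) + (-1) * (if j = k then 1 else 0) = (if i = k then 1 else (0::int))"
    using Suc assms by auto
  ultimately have R: "rep1 k (if i = k then 1 else 0) (\<lambda>n. bb i n + (-1) * bb j n)" by simp
  show ?thesis
    by (rule rep1_ext[OF R]) (use Suc bb_shift in auto)
qed

lemma repA_shift:
  assumes "repA k t g"
  shows "rep1 k t (\<lambda>n. g (n - 1))"
proof -
  obtain c where c: "c k = t" "\<forall>n. g n = (\<Sum>i\<le>k. c i * bb i n)"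
    using assms repA_def by auto
  have "rep1 k (\<Sum>i\<le>k. c i * (if i = k then 1 else 0)) (\<lambda>n. \<Sum>i\<le>k. c i * bb i (n - 1))"
    apply (rule rep1_sum)
     apply simp
    apply (rule rep1_scale)
    apply (rule rep1_bb_shift)
    by simp
  moreover have "(\<Sum>i\<le>k. c i * (if i = k then 1 else 0)) = t"
    using c by (simp add: if_distrib cong: if_cong)
  ultimately show ?thesis using c by simp
qed

lemma integ:
  assumes "rep1 k t d" "\<And>n. n \<ge> 1 \<Longrightarrow> f n - f (n - 1) = d n"
  shows "repA (Suc k) t f"
proof -
  obtain c where c: "c k = t" "\<forall>n\<ge>1. d n = (\<Sum>i\<le>k. c i * bb i n)"
    using assms repA_def rep1_def by auto
  have F: "f n = f 0 + (\<Sum>i\<le>k. c i * bb (Suc i) n)" for n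
  proof (induction n)
    case 0 then show ?case by simp
  next
    case (Suc n)
    have "f (Suc n) = f n + d (Suc n)" using assms(2)[of "Suc n"] by simp
    also have "\<dots> = f 0 + (\<Sum>i\<le>k. c i * bb (Suc i) n) + (\<Sum>i\<le>k. c i * bb i (Suc n))"
      using Suc c by simp
    also have "\<dots> = f 0 + (\<Sum>i\<le>k. c i * bb (Suc i) (Suc n))"
      by (simp add: bb_pascal algebra_simps sum.distrib)
    finally show ?case .
  qed
  show ?thesis unfolding repA_def
  proof (rule exI[of _ "\<lambda>j. if j = 0 then f 0 else c (j - 1)"], intro conjI allI)
    fix n
    show "f n = (\<Sum>i\<le>Suc k. (if i = 0 then f 0 else c (i - 1)) * bb i n)"
      unfolding sum.atMost_Suc_shift using F[of n] by simp
  qed (use c in simp)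
qed

lemma telescope:
  "int ((a + m) choose Suc k) - int (a choose Suc k) = (\<Sum>t<m. int ((a + t) choose k))"
  by (induction m) (auto simp: algebra_simps)

lemma rep_binom: "repA k (int m ^ k) (\<lambda>n. int ((m * n + c) choose k))"
proof (induction k arbitrary: c)
  case 0
  then show ?case unfolding repA_def by (rule_tac exI[of _ "\<lambda>_. 1"]) simp
next
  case (Suc k)
  have "rep1 k (\<Sum>t<m. int m ^ k) (\<lambda>n. \<Sum>t<m. int ((m * (n - 1) + (c + t)) choose k))"
    by (rule rep1_sum) (use repA_shift[OF Suc.IH] in auto)
  then have R: "rep1 k (int m ^ Suc k) (\<lambda>n. \<Sum>t<m. int ((m * (n - 1) + (c + t)) choose k))"
    by simp
  show ?case
  proof (rule integ[OF R])
    fix n :: nat assume "n \<ge> 1"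
    then have e: "m * n + c = (m * (n - 1) + c) + m"
      by (cases n) auto
    show "int ((m * n + c) choose Suc k) - int ((m * (n - 1) + c) choose Suc k) =
          (\<Sum>t<m. int ((m * (n - 1) + (c + t)) choose k))"
      unfolding e telescope by (simp add: add.assoc)
  qed
qed

lemma uniq:
  assumes "N \<ge> 1" "\<And>n. n \<ge> N \<Longrightarrow> (\<Sum>i\<le>k. d i * bb i n) = 0"
  shows "\<forall>i\<le>k. d i = 0"
  using assms
proof (induction k arbitrary: d N)
  case 0
  then show ?case using 0(2)[of N] by simp
next
  case (Suc k)
  have "(\<Sum>i\<le>k. d (Suc i) * bb i n) = 0" if "n \<ge> N + 1" for n
  proof -
    have "(\<Sum>i\<le>k. d (Suc i) * bb i n) =
          (\<Sum>i\<le>Suc k. d i * bb i n) - (\<Sum>i\<le>Suc k. d i * bb i (n - 1))"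
    proof -
      have "(\<Sum>i\<le>k. d (Suc i) * bb i n) = (\<Sum>i\<le>k. d (Suc i) * bb (Suc i) n - d (Suc i) * bb (Suc i) (n - 1))"
        by (rule sum.cong, simp) (use that bb_diff[of n] in \<open>simp flip: right_diff_distrib\<close>)
      then show ?thesis by (simp only: sum.atMost_Suc_shift) (simp add: sum_subtractf)
    qed
    also have "\<dots> = 0" using Suc.prems(2)[of n] Suc.prems(2)[of "n - 1"] that by simp
    finally show ?thesis .
  qed
  then have "\<forall>i\<le>k. d (Suc i) = 0" using Suc.IH[of "N + 1" "\<lambda>i. d (Suc i)"] Suc.prems by auto
  moreover have "d 0 = 0"
    using Suc.prems(2)[of N] calculation unfolding sum.atMost_Suc_shift by simp
  ultimately show ?case
  proof (intro allI impI)
    fix i assume "i \<le> Suc k" "\<forall>i\<le>k. d (Suc i) = 0" "d 0 = 0"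
    then show "d i = 0" by (cases i) auto
  qed
qed

definition alpha_P :: "nat \<Rightarrow> nat \<Rightarrow> (nat \<Rightarrow> int) \<Rightarrow> bool" where
  "alpha_P m r a \<longleftrightarrow> (\<forall>i. i \<notin> {1..r} \<longrightarrow> a i = 0) \<and>
      (\<forall>n\<ge>1. int ((m * n + r - 1) choose r) =
              (\<Sum>i=1..r. a i * int ((n + i - 1) choose i)))"

lemma alpha_exists:
  assumes "r \<ge> 1"
  shows "\<exists>a. alpha_P m r a \<and> a r = int m ^ r"
proof -
  obtain c where c: "c r = int m ^ r" "\<forall>n. int ((m * n + (r - 1)) choose r) = (\<Sum>i\<le>r. c i * bb i n)"
    using rep_binom[of r m "r - 1"] unfolding repA_def by auto
  have c0: "c 0 = 0"
  proof -
    have "(\<Sum>i\<le>r. c i * bb i 0) = c 0"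
      using assms by (cases r) (simp_all only: sum.atMost_Suc_shift, simp_all)
    then show ?thesis using c(2)[rule_format, of 0] assms by (simp add: binomial_eq_0)
  qed
  let ?a = "\<lambda>i. if i \<in> {1..r} then c i else 0"
  have "alpha_P m r ?a"
    unfolding alpha_P_def
  proof (intro conjI allI impI)
    fix n :: nat assume "n \<ge> 1"
    have "(\<Sum>i\<le>r. c i * bb i n) = c 0 * bb 0 n + (\<Sum>i=1..r. c i * bb i n)"
      by (simp add: atMost_atLeast0 sum.atLeast_Suc_atMost)
    then show "int ((m * n + r - 1) choose r) = (\<Sum>i=1..r. ?a i * int ((n + i - 1) choose i))"
      using c(2)[rule_format, of n] c0 assms by (simp add: bb_def)
  qed auto
  then show ?thesis using c assms by (intro exI[of _ ?a]) auto
qed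

lemma alpha_unique:
  assumes "alpha_P m r a" "alpha_P m r a'"
  shows "a = a'"
proof -
  let ?d = "\<lambda>i. a i - a' i"
  have "(\<Sum>i\<le>r. ?d i * bb i n) = 0" if "n \<ge> 1" for n
  proof -
    have "(\<Sum>i\<le>r. ?d i * bb i n) = ?d 0 * bb 0 n + (\<Sum>i=1..r. ?d i * bb i n)"
      by (simp add: atMost_atLeast0 sum.atLeast_Suc_atMost)
    also have "\<dots> = 0"
      using assms that unfolding alpha_P_def
      by (simp add: bb_def left_diff_distrib sum_subtractf)
    finally show ?thesis .
  qed
  then have "\<forall>i\<le>r. ?d i = 0" using uniq[where N=1 and k=r and d="?d"] by auto
  note D = this
  show ?thesis
  proof
    fix i
    show "a i = a' i"
    proof (cases "i \<in> {1..r}")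
      case True
      then have "?d i = 0" using D by auto
      then show ?thesis by simp
    next
      case False
      then show ?thesis using assms unfolding alpha_P_def by auto
    qed
  qed
qed

lemma alpha_spec:
  assumes "r \<ge> 1"
  shows "alpha_P m r (alpha m r)" "alpha m r r = int m ^ r"
proof -
  obtain a where a: "alpha_P m r a" "a r = int m ^ r" using alpha_exists[OF assms] by blast
  have "alpha m r = a"
    unfolding alpha_def alpha_P_def[symmetric]
    by (rule the_equality) (use a alpha_unique in auto)
  then show "alpha_P m r (alpha m r)" "alpha m r r = int m ^ r" using a by auto
qed


lemma geom_nth [simp]: "fps_nth geom n = 1"
  by (simp add: geom_def)

lemma mult_geom_nth: "fps_nth (geom * f) n = (\<Sum>j\<le>n. fps_nth f j)"
proof -
  have "fps_nth (geom * f) n = fps_nth (f * geom) n" by (simp add: mult.commute)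
  also have "\<dots> = (\<Sum>j=0..n. fps_nth f j)" by (simp add: fps_mult_nth)
  finally show ?thesis by (simp add: atMost_atLeast0)
qed

lemma h_Suc: "h (Suc r) = geom * h r"
  by (simp add: h_def algebra_simps)

lemma h_0: "h 0 = fps_X * geom"
  by (simp add: h_def)

lemma sum_bb: "(\<Sum>j\<le>n. if j = 0 then 0 else bb r j) = bb (Suc r) n"
  by (induction n) (simp_all add: bb_pascal)

lemma h_nth: "fps_nth (h r) n = (if n = 0 then 0 else bb r n)"
proof (induction r arbitrary: n)
  case 0
  then show ?case by (simp add: h_0)
next
  case (Suc r)
  then show ?case by (simp add: h_Suc mult_geom_nth sum_bb)
qed

lemma U_add: "U m (f + g) = U m f + U m g"
  by (simp add: U_def fps_eq_iff)

lemma U_diff: "U m (f - g) = U m f - U m g"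
  by (simp add: U_def fps_eq_iff)

lemma U_const: "U m (fps_const c * f) = fps_const c * U m f"
  by (simp add: U_def fps_eq_iff)

lemma U_zero: "U m 0 = 0"
  by (rule fps_ext) (simp add: U_def)

lemma U_sum: "U m (\<Sum>x\<in>S. f x) = (\<Sum>x\<in>S. U m (f x))"
  by (induction S rule: infinite_finite_induct) (simp_all add: U_add U_zero)

lemma U_h:
  assumes "m \<ge> 1" "r \<ge> 1"
  shows "U m (h r) = (\<Sum>i=1..r. fps_const (alpha m r i) * h i)"
proof (rule fps_ext)
  fix n
  show "fps_nth (U m (h r)) n = fps_nth (\<Sum>i=1..r. fps_const (alpha m r i) * h i) n"
  proof (cases "n = 0")
    case True
    then show ?thesis by (simp add: U_def h_nth fps_sum_nth)
  next
    case False
    then have "m * n \<noteq> 0" using assms by simp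
    moreover have "int ((m * n + r - 1) choose r) = (\<Sum>i=1..r. alpha m r i * int ((n + i - 1) choose i))"
      using alpha_spec(1)[OF assms(2), of m] False unfolding alpha_P_def by simp
    ultimately show ?thesis using False assms
      by (simp add: U_def h_nth fps_sum_nth bb_def)
  qed
qed

lemma H_Nil: "H [] = h 0"
  by (simp add: H_def h_0)

lemma H_snoc: "H (ms @ [m]) = U m (geom * H ms)"
  by (simp add: H_def)

definition Fstep :: "(int list \<Rightarrow> nat list \<Rightarrow> int) \<Rightarrow> int list \<Rightarrow> nat list \<Rightarrow> int" where
 "Fstep g J ms = (let r = length ms; s = length J in
   if last J = int r then (if 2 \<le> s then g (butlast J) (butlast ms) else 0)
   else if J = [int (r - s)..int r - 1] then
     - (C ms r s * alpha (last ms) r s +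
        (\<Sum>i=s+1..r-1. C ms r i * alpha (last ms) r i *
           beta0 g [int (i - s + 1)..int i] (take i (drop (r - i - 1) ms))))
   else - (\<Sum>i=s+1..r-1. C ms r i * alpha (last ms) r i *
           beta0 g (map (\<lambda>j. j - int (r - i) + 1) J) (take i (drop (r - i - 1) ms))))"

primrec BB :: "nat \<Rightarrow> int list \<Rightarrow> nat list \<Rightarrow> int" where
  "BB 0 = (\<lambda>J ms. 0)"
| "BB (Suc n) = (\<lambda>J ms. if length ms \<le> n then BB n J ms else Fstep (BB n) J ms)"

definition beta :: "int list \<Rightarrow> nat list \<Rightarrow> int" where
  "beta J ms = BB (length ms) J ms"

lemma BB_stable: "length ms \<le> n \<Longrightarrow> BB n J ms = beta J ms"
proof (induction n arbitrary: J ms)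
  case 0
  then show ?case by (simp add: beta_def)
next
  case (Suc n)
  show ?case
  proof (cases "length ms \<le> n")
    case True
    then show ?thesis using Suc by simp
  next
    case False
    then have "length ms = Suc n" using Suc.prems by simp
    then show ?thesis by (simp add: beta_def)
  qed
qed

lemma Fstep_cong:
  assumes "length ms \<ge> 1"
    and "\<And>J' ms'. length ms' < length ms \<Longrightarrow> g J' ms' = g' J' ms'"
  shows "Fstep g J ms = Fstep g' J ms"
proof -
  have b: "beta0 g K (take i (drop (length ms - i - 1) ms)) = beta0 g' K (take i (drop (length ms - i - 1) ms))"
    if "i < length ms" for i K
    using that assms(2)[of "take i (drop (length ms - i - 1) ms)" K] by (auto simp: beta0_def)
  have c: "g (butlast J) (butlast ms) = g' (butlast J) (butlast ms)"
    using assms by simp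
  show ?thesis
    unfolding Fstep_def Let_def using c assms
    by (intro if_cong refl arg_cong2[where f="(+)"] arg_cong[where f=uminus] sum.cong arg_cong2[where f="(*)"] b) auto
qed

lemma beta_unfold:
  assumes "length ms \<ge> 1"
  shows "beta J ms = Fstep beta J ms"
proof -
  obtain n where n: "length ms = Suc n" using assms by (cases "length ms") auto
  have "beta J ms = Fstep (BB n) J ms" by (simp add: beta_def n)
  also have "\<dots> = Fstep beta J ms"
    by (rule Fstep_cong) (use assms n BB_stable in auto)
  finally show ?thesis .
qed


lemma sorted_wrt_map_mono:
  assumes "sorted_wrt (<) xs" "strict_mono f"
  shows "sorted_wrt (<) (map f xs)"
  using assms by (induction xs) (auto simp: strict_mono_def)

lemma sorted_shift:
  assumes "finite J"
  shows "sorted_list_of_set ((\<lambda>j. j + d) ` J) = map (\<lambda>j. j + (d::nat)) (sorted_list_of_set J)"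
proof -
  have sm: "strict_mono (\<lambda>j::nat. j + d)" by (simp add: strict_mono_def)
  have "sorted_wrt (<) (map (\<lambda>j. j + d) (sorted_list_of_set J)) \<and>
        set (map (\<lambda>j. j + d) (sorted_list_of_set J)) = (\<lambda>j. j + d) ` J \<and>
        length (map (\<lambda>j. j + d) (sorted_list_of_set J)) = card ((\<lambda>j. j + d) ` J)"
    using assms sorted_wrt_map_mono[OF _ sm] by (auto simp: card_image)
  then show ?thesis
    using sorted_list_of_set_unique[of "(\<lambda>j. j + d) ` J" "map (\<lambda>j. j + d) (sorted_list_of_set J)"] assms
    by simp
qed

lemma sorted_insert_max:
  assumes "finite J" "\<forall>j\<in>J. j < r"
  shows "sorted_list_of_set (insert r J) = sorted_list_of_set J @ [r]"
proof -
  have "r \<notin> J" using assms by auto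
  have "sorted_wrt (<) (sorted_list_of_set J @ [r]) \<and> set (sorted_list_of_set J @ [r]) = insert r J \<and>
        length (sorted_list_of_set J @ [r]) = card (insert r J)"
    using assms \<open>r \<notin> J\<close> by (auto simp: sorted_wrt_append)
  then show ?thesis
    using sorted_list_of_set_unique[of "insert r J" "sorted_list_of_set J @ [r]"] assms
    by simp
qed

lemma map_int_sorted_eq_upto:
  assumes "finite J"
  shows "map int (sorted_list_of_set J) = [int a..int b] \<longleftrightarrow> J = {a..b}"
proof
  assume A: "map int (sorted_list_of_set J) = [int a..int b]"
  have I: "int ` J = {int a..int b}"
    using arg_cong[OF A, of set] assms by simp
  have "x \<in> J \<longleftrightarrow> int x \<in> int ` J" for x
    by (simp add: inj_image_mem_iff)
  then have "x \<in> J \<longleftrightarrow> int x \<in> {int a..int b}" for x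
    unfolding I .
  note X = this
  show "J = {a..b}"
  proof (rule set_eqI)
    fix x show "x \<in> J \<longleftrightarrow> x \<in> {a..b}" using X[of x] by simp
  qed
next
  assume J: "J = {a..b}"
  have "int ` {a..b} = {int a..int b}"
  proof (rule set_eqI)
    fix x :: int
    show "x \<in> int ` {a..b} \<longleftrightarrow> x \<in> {int a..int b}"
    proof
      assume "x \<in> {int a..int b}"
      then have "x = int (nat x)" "nat x \<in> {a..b}" by auto
      then show "x \<in> int ` {a..b}" by (metis imageI)
    qed auto
  qed
  then have "set (map int (sorted_list_of_set J)) = set [int a..int b]"
    using J by simp
  moreover have "sorted_wrt (<) (map int (sorted_list_of_set J))"
    by (rule sorted_wrt_map_mono) (auto simp: strict_mono_def)
  ultimately show "map int (sorted_list_of_set J) = [int a..int b]"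
    using strict_sorted_equal[of "[int a..int b]" "map int (sorted_list_of_set J)"] by simp
qed

lemma map_shift_upto:
  "map (\<lambda>j. j + c) [a..b] = [a + c..b + (c::int)]"
proof -
  have "sorted_wrt (<) (map (\<lambda>j. j + c) [a..b])"
    by (rule sorted_wrt_map_mono) (auto simp: strict_mono_def)
  moreover have "set (map (\<lambda>j. j + c) [a..b]) = set [a + c..b + c]"
    by (auto simp: image_iff)
  ultimately show ?thesis using strict_sorted_equal[of "[a + c..b + c]" "map (\<lambda>j. j + c) [a..b]"] by simp
qed

lemma nth_snoc_lt: "1 \<le> j \<Longrightarrow> j \<le> length ms \<Longrightarrow> (ms @ [m]) ! (j - 1) = ms ! (j - 1)"
  by (cases j) (auto simp: nth_append)

definition Lp :: "nat list \<Rightarrow> int" where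
  "Lp ms = (\<Prod>j=1..length ms. int (ms ! (j - 1)) ^ j)"

definition Sub :: "nat list \<Rightarrow> nat set \<Rightarrow> nat list" where
  "Sub ms J = map (\<lambda>j. ms ! (j - 1)) (sorted_list_of_set J)"

definition Bt :: "nat list \<Rightarrow> nat set \<Rightarrow> int" where
  "Bt ms J = beta (map int (sorted_list_of_set J)) ms"

definition Fam :: "nat \<Rightarrow> nat set set" where
  "Fam r = {J. J \<subseteq> {1..r} \<and> J \<noteq> {} \<and> card J < r}"

definition Rest :: "nat list \<Rightarrow> int fps" where
  "Rest ms = (\<Sum>J\<in>Fam (length ms). fps_const (Bt ms J) * H (Sub ms J))"

lemma finite_Fam: "finite (Fam r)"
proof -
  have "Fam r \<subseteq> Pow {1..r}" by (auto simp: Fam_def)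
  then show ?thesis by (rule finite_subset) simp
qed

lemma statement_sum:
  "(\<Sum>s=1..r-1. \<Sum>J\<in>{J. J \<subseteq> {1..r} \<and> card J = s}. f J) = (\<Sum>J\<in>Fam r. f J)"
proof -
  have "(\<Sum>s=1..r-1. \<Sum>J\<in>{J. J \<subseteq> {1..r} \<and> card J = s}. f J) =
        (\<Sum>s=1..r-1. \<Sum>J\<in>{J. J \<in> Fam r \<and> card J = s}. f J)"
  proof (rule sum.cong[OF refl])
    fix s assume "s \<in> {1..r-1}"
    then have "{J. J \<subseteq> {1..r} \<and> card J = s} = {J. J \<in> Fam r \<and> card J = s}"
      by (auto simp: Fam_def)
    then show "(\<Sum>J\<in>{J. J \<subseteq> {1..r} \<and> card J = s}. f J) = (\<Sum>J\<in>{J. J \<in> Fam r \<and> card J = s}. f J)"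
      by simp
  qed
  also have "\<dots> = (\<Sum>J\<in>Fam r. f J)"
  proof (rule sum.group[OF finite_Fam])
    show "card ` Fam r \<subseteq> {1..r - 1}"
    proof
      fix c assume "c \<in> card ` Fam r"
      then obtain J where J: "J \<in> Fam r" "c = card J" by auto
      then have "finite J" unfolding Fam_def using finite_subset[OF _ finite_atLeastAtMost] by blast
      then show "c \<in> {1..r - 1}" using J by (auto simp: Fam_def Suc_le_eq card_gt_0_iff)
    qed
  qed simp
  finally show ?thesis .
qed

lemma Sub_block:
  assumes "d + i \<le> length xs"
  shows "Sub xs {d+1..d+i} = take i (drop d xs)"
proof -
  have e: "sorted_list_of_set {d+1..d+i} = [d+1..<d+i+1]"
    by (simp add: atLeastLessThanSuc_atLeastAtMost[symmetric] del: upt_Suc)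
  show ?thesis
    unfolding Sub_def e
  proof (rule nth_equalityI)
    show "length (map (\<lambda>j. xs ! (j - 1)) [d + 1..<d + i + 1]) = length (take i (drop d xs))"
      using assms by simp
    fix k assume "k < length (map (\<lambda>j. xs ! (j - 1)) [d + 1..<d + i + 1])"
    then have k: "k < i" by (simp del: upt_Suc)
    then have "[d + 1..<d + i + 1] ! k = d + 1 + k" by (simp del: upt_Suc)
    then show "map (\<lambda>j. xs ! (j - 1)) [d + 1..<d + i + 1] ! k = take i (drop d xs) ! k"
      using k assms by (simp del: upt_Suc)
  qed
qed

lemma Sub_shift:
  assumes "J \<subseteq> {1..i}" "d + i \<le> length xs"
  shows "Sub xs ((\<lambda>j. j + d) ` J) = Sub (take i (drop d xs)) J"
proof -
  have fJ: "finite J" using assms(1) finite_subset by blast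
  have "xs ! (j + d - 1) = take i (drop d xs) ! (j - 1)" if "j \<in> J" for j
  proof -
    have "1 \<le> j" "j \<le> i" using that assms by auto
    then show ?thesis using assms by (simp add: add.commute)
  qed
  then show ?thesis
    unfolding Sub_def sorted_shift[OF fJ] using fJ by auto
qed

lemma Sub_snoc_insert:
  assumes "J \<subseteq> {1..length ms}"
  shows "Sub (ms @ [m]) (insert (Suc (length ms)) J) = Sub ms J @ [m]"
proof -
  have fJ: "finite J" using assms finite_subset by blast
  have "sorted_list_of_set (insert (Suc (length ms)) J) = sorted_list_of_set J @ [Suc (length ms)]"
    using assms by (intro sorted_insert_max fJ) auto
  moreover have "(ms @ [m]) ! (j - 1) = ms ! (j - 1)" if "j \<in> J" for j
  proof -
    have "1 \<le> j" "j \<le> length ms" using that assms by auto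
    then show ?thesis using nth_snoc_lt[of j ms m] by simp
  qed
  ultimately show ?thesis unfolding Sub_def using fJ by auto
qed

lemma Sub_snoc:
  assumes "J \<subseteq> {1..length ms}"
  shows "Sub (ms @ [m]) J = Sub ms J"
proof -
  have fJ: "finite J" using assms finite_subset by blast
  have "(ms @ [m]) ! (j - 1) = ms ! (j - 1)" if "j \<in> J" for j
  proof -
    have "1 \<le> j" "j \<le> length ms" using that assms by auto
    then show ?thesis using nth_snoc_lt[of j ms m] by simp
  qed
  then show ?thesis unfolding Sub_def using fJ by auto
qed


lemma Lp_snoc: "Lp (ms @ [m]) = Lp ms * int m ^ Suc (length ms)"
proof -
  have "(\<Prod>j=1..length ms. int ((ms @ [m]) ! (j - 1)) ^ j) = (\<Prod>j=1..length ms. int (ms ! (j - 1)) ^ j)"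
    by (rule prod.cong[OF refl]) (use nth_snoc_lt[of _ ms m] in auto)
  then show ?thesis unfolding Lp_def by (simp add: nth_append)
qed

lemma Lp_split:
  assumes "1 \<le> i" "i \<le> n" "length ms = n"
  shows "Lp ms = C (ms @ [m]) (Suc n) i * Lp (take i (drop (n - i) (ms @ [m])))"
proof -
  define d where "d = n - i"
  define x where "x j = int ((ms @ [m]) ! (j - 1))" for j
  have nd: "n = d + i" using assms d_def by simp
  have "Lp ms = (\<Prod>j=1..n. x j ^ j)"
    unfolding Lp_def x_def using assms by (intro prod.cong refl) (use nth_snoc_lt[of _ ms m] in auto)
  also have "\<dots> = (\<Prod>j=1..d. x j ^ j) * (\<Prod>j=d+1..d+i. x j ^ j)"
    unfolding nd by (rule prod.ub_add_nat) simp
  also have "(\<Prod>j=d+1..d+i. x j ^ j) = (\<Prod>j=1..i. x (j + d) ^ (j + d))"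
    using prod.shift_bounds_cl_nat_ivl[of "\<lambda>j. x j ^ j" 1 d i] by (simp add: add.commute)
  also have "\<dots> = (\<Prod>j=1..i. x (j + d) ^ d) * (\<Prod>j=1..i. x (j + d) ^ j)"
    by (simp add: power_add prod.distrib mult.commute)
  also have "(\<Prod>j=1..i. x (j + d) ^ d) = (\<Prod>j=Suc n - i..Suc n - 1. x j ^ (Suc n - i - 1))"
    using prod.shift_bounds_cl_nat_ivl[of "\<lambda>j. x j ^ d" 1 d i] nd by (simp add: add.commute)
  also have "(\<Prod>j=1..i. x (j + d) ^ j) = Lp (take i (drop (n - i) (ms @ [m])))"
    unfolding Lp_def x_def d_def using assms
    by (intro prod.cong) (auto simp: add.commute nth_append)
  finally show ?thesis
    unfolding C_def x_def d_def using assms by (simp add: mult.assoc)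
qed

lemma Bt_snoc_insert:
  assumes "J \<in> Fam n" "length ms = n"
  shows "Bt (ms @ [m]) (insert (Suc n) J) = Bt ms J"
proof -
  have J: "J \<subseteq> {1..n}" "J \<noteq> {}" using assms by (auto simp: Fam_def)
  have fJ: "finite J" using J finite_subset by blast
  have cJ: "card J \<ge> 1" using J fJ by (simp add: Suc_le_eq card_gt_0_iff)
  have s: "sorted_list_of_set (insert (Suc n) J) = sorted_list_of_set J @ [Suc n]"
    using J fJ by (intro sorted_insert_max) auto
  show ?thesis
    unfolding Bt_def s using beta_unfold[of "ms @ [m]"] assms cJ fJ
    by (simp add: Fstep_def Let_def)
qed

lemma Bt_single:
  assumes "length ms = n"
  shows "Bt (ms @ [m]) {Suc n} = 0"
  unfolding Bt_def using beta_unfold[of "ms @ [m]"] assms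
  by (simp add: Fstep_def Let_def)

lemma Bt_G:
  assumes "J \<subseteq> {1..n}" "J \<noteq> {}" "length ms = n"
  shows "Bt (ms @ [m]) J = - ((if J = {Suc n - card J..n}
              then C (ms @ [m]) (Suc n) (card J) * alpha m (Suc n) (card J) else 0) +
          (\<Sum>i=card J+1..n. C (ms @ [m]) (Suc n) i * alpha m (Suc n) i *
             beta0 beta (map (\<lambda>j. j - int (Suc n - i) + 1) (map int (sorted_list_of_set J)))
               (take i (drop (n - i) (ms @ [m])))))"
proof -
  let ?L = "map int (sorted_list_of_set J)"
  have fJ: "finite J" using assms finite_subset by blast
  have lenL: "length ?L = card J" by simp
  have cJ: "card J \<ge> 1" using assms fJ by (simp add: Suc_le_eq card_gt_0_iff)
  have cn: "card J \<le> n" using card_mono[OF _ assms(1)] by simp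
  have setL: "set ?L = int ` J" using fJ by simp
  have Lne: "?L \<noteq> []" using assms fJ by simp
  have lastL: "last ?L \<noteq> int (Suc n)"
  proof
    assume "last ?L = int (Suc n)"
    moreover have "last ?L \<in> int ` J" using last_in_set[OF Lne] setL by blast
    ultimately show False using assms(1) by auto
  qed
  have iff: "?L = [int (Suc n - card J)..int (Suc n) - 1] \<longleftrightarrow> J = {Suc n - card J..n}"
    using map_int_sorted_eq_upto[OF fJ, of "Suc n - card J" n] by simp
  have shift: "[int (i - card J + 1)..int i] = map (\<lambda>j. j - int (Suc n - i) + 1) ?L"
    if "J = {Suc n - card J..n}" "i \<in> {card J+1..n}" for i
  proof -
    have L: "?L = [int (Suc n - card J)..int n]"
      using map_int_sorted_eq_upto[OF fJ, of "Suc n - card J" n] that(1) by simp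
    have "map (\<lambda>j. j - int (Suc n - i) + 1) ?L = map (\<lambda>j. j + (1 - int (Suc n - i))) ?L"
      by (simp add: algebra_simps)
    also have "\<dots> = [int (Suc n - card J) + (1 - int (Suc n - i))..int n + (1 - int (Suc n - i))]"
      unfolding L map_shift_upto ..
    also have "\<dots> = [int (i - card J + 1)..int i]"
      using that(2) cn by (simp add: of_nat_diff)
    finally show ?thesis by simp
  qed
  have B: "Bt (ms @ [m]) J = Fstep beta ?L (ms @ [m])"
    unfolding Bt_def using beta_unfold[of "ms @ [m]"] by simp
  have len: "length (ms @ [m]) = Suc n" using assms by simp
  have sd: "\<And>i. Suc n - i - 1 = n - i" "Suc n - 1 = n" by auto
  have c1: "(last ?L = int (Suc n)) = False" using lastL by simp
  have F: "Fstep beta ?L (ms @ [m]) = (if ?L = [int (Suc n - card J)..int (Suc n) - 1] then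
     - (C (ms @ [m]) (Suc n) (card J) * alpha m (Suc n) (card J) +
        (\<Sum>i=card J+1..n. C (ms @ [m]) (Suc n) i * alpha m (Suc n) i *
           beta0 beta [int (i - card J + 1)..int i] (take i (drop (n - i) (ms @ [m])))))
   else - (\<Sum>i=card J+1..n. C (ms @ [m]) (Suc n) i * alpha m (Suc n) i *
           beta0 beta (map (\<lambda>j. j - int (Suc n - i) + 1) ?L) (take i (drop (n - i) (ms @ [m])))))"
    unfolding Fstep_def Let_def len lenL last_snoc c1 if_False sd ..
  show ?thesis
  proof (cases "J = {Suc n - card J..n}")
    case True
    have "(\<Sum>i=card J+1..n. C (ms @ [m]) (Suc n) i * alpha m (Suc n) i *
             beta0 beta [int (i - card J + 1)..int i] (take i (drop (n - i) (ms @ [m])))) =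
          (\<Sum>i=card J+1..n. C (ms @ [m]) (Suc n) i * alpha m (Suc n) i *
             beta0 beta (map (\<lambda>j. j - int (Suc n - i) + 1) ?L) (take i (drop (n - i) (ms @ [m]))))"
      by (rule sum.cong[OF refl]) (simp only: shift[OF True])
    moreover have L: "?L = [int (Suc n - card J)..int (Suc n) - 1]" using iff True by simp
    ultimately show ?thesis
      unfolding B F if_P[OF L] if_P[OF True] by simp
  next
    case False
    have L: "?L \<noteq> [int (Suc n - card J)..int (Suc n) - 1]" using iff False by simp
    show ?thesis
      unfolding B F if_not_P[OF L] if_not_P[OF False] by simp
  qed
qed


lemma Fam_facts:
  assumes "J \<in> Fam n"
  shows "J \<subseteq> {1..n}" "J \<noteq> {}" "card J < n" "finite J"
  using assms finite_subset[OF _ finite_atLeastAtMost] by (auto simp: Fam_def)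

lemma partA:
  assumes "length ms = n"
  shows "(\<Sum>J\<in>{J\<in>Fam (Suc n). Suc n \<in> J}. fps_const (Bt (ms @ [m]) J) * H (Sub (ms @ [m]) J)) =
         (\<Sum>J\<in>Fam n. fps_const (Bt ms J) * H (Sub ms J @ [m]))"
proof -
  let ?f = "\<lambda>J. fps_const (Bt (ms @ [m]) J) * H (Sub (ms @ [m]) J)"
  let ?A = "{J\<in>Fam (Suc n). Suc n \<in> J}"
  have fin: "finite ?A" using finite_Fam by simp
  have "(\<Sum>J\<in>?A. ?f J) = (\<Sum>J\<in>?A - {{Suc n}}. ?f J)"
    by (rule sum.mono_neutral_right[OF fin]) (auto simp: Bt_single[OF assms(1)])
  also have "\<dots> = (\<Sum>J\<in>Fam n. fps_const (Bt ms J) * H (Sub ms J @ [m]))"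
  proof (rule sym, rule sum.reindex_bij_witness[where i="\<lambda>J. J - {Suc n}" and j="insert (Suc n)"])
    fix a assume a: "a \<in> Fam n"
    note F = Fam_facts[OF a]
    have nn: "Suc n \<notin> a" using F by auto
    show "insert (Suc n) a - {Suc n} = a" using nn by simp
    have "card (insert (Suc n) a) < Suc n" using F nn by simp
    moreover have "insert (Suc n) a \<noteq> {Suc n}" using F by auto
    ultimately show "insert (Suc n) a \<in> ?A - {{Suc n}}" using F by (auto simp: Fam_def)
    show "?f (insert (Suc n) a) = fps_const (Bt ms a) * H (Sub ms a @ [m])"
      using Bt_snoc_insert[OF a assms] Sub_snoc_insert[of a ms m] F assms by simp
  next
    fix b assume b: "b \<in> ?A - {{Suc n}}"
    then have b1: "b \<in> Fam (Suc n)" "Suc n \<in> b" "b \<noteq> {Suc n}" by auto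
    note F = Fam_facts[OF b1(1)]
    show "insert (Suc n) (b - {Suc n}) = b" using b1 by auto
    have "b - {Suc n} \<subseteq> {1..n}" using F by auto
    moreover have "b - {Suc n} \<noteq> {}" using b1 by auto
    moreover have "card (b - {Suc n}) < n"
    proof -
      have "card b \<ge> 1" using F by (simp add: Suc_le_eq card_gt_0_iff)
      then show ?thesis using F b1 by simp
    qed
    ultimately show "b - {Suc n} \<in> Fam n" by (simp add: Fam_def)
  qed
  finally show ?thesis .
qed


definition Gs :: "nat \<Rightarrow> nat set set" where
  "Gs n = {J. J \<subseteq> {1..n} \<and> J \<noteq> {}}"

lemma finite_Gs: "finite (Gs n)"
proof -
  have "Gs n \<subseteq> Pow {1..n}" by (auto simp: Gs_def)
  then show ?thesis by (rule finite_subset) simp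
qed

lemma Gs_facts:
  assumes "J \<in> Gs n"
  shows "J \<subseteq> {1..n}" "J \<noteq> {}" "finite J" "1 \<le> card J" "card J \<le> n"
proof -
  show J: "J \<subseteq> {1..n}" "J \<noteq> {}" using assms by (auto simp: Gs_def)
  show f: "finite J" using J finite_subset by blast
  show "1 \<le> card J" using J f by (simp add: Suc_le_eq card_gt_0_iff)
  show "card J \<le> n" using card_mono[OF _ J(1)] by simp
qed

lemma partB1:
  assumes "length ms = n"
  shows "(\<Sum>J\<in>Gs n. (if J = {Suc n - card J..n} then fps_const (C (ms @ [m]) (Suc n) (card J) *
              alpha m (Suc n) (card J)) * H (Sub (ms @ [m]) J) else 0)) =
         (\<Sum>i=1..n. fps_const (C (ms @ [m]) (Suc n) i * alpha m (Suc n) i) *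
              H (take i (drop (n - i) (ms @ [m]))))"
proof -
  let ?K = "\<lambda>i. {Suc n - i..n}"
  let ?g = "\<lambda>J. fps_const (C (ms @ [m]) (Suc n) (card J) * alpha m (Suc n) (card J)) * H (Sub (ms @ [m]) J)"
  have cardK: "card (?K i) = i" if "i \<le> n" for i using that by simp
  have inj: "inj_on ?K {1..n}"
    by (rule inj_on_inverseI[of _ card]) (simp add: cardK)
  have "(\<Sum>i=1..n. fps_const (C (ms @ [m]) (Suc n) i * alpha m (Suc n) i) *
              H (take i (drop (n - i) (ms @ [m])))) = (\<Sum>i=1..n. ?g (?K i))"
  proof (rule sum.cong[OF refl])
    fix i assume i: "i \<in> {1..n}"
    have e: "?K i = {(n - i) + 1..(n - i) + i}" using i by auto
    have "Sub (ms @ [m]) (?K i) = take i (drop (n - i) (ms @ [m]))"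
      unfolding e by (rule Sub_block) (use assms i in simp)
    then show "fps_const (C (ms @ [m]) (Suc n) i * alpha m (Suc n) i) *
              H (take i (drop (n - i) (ms @ [m]))) = ?g (?K i)"
      using cardK i by simp
  qed
  also have "\<dots> = (\<Sum>J\<in>?K ` {1..n}. ?g J)"
    by (simp only: sum.reindex[OF inj] comp_def)
  also have "\<dots> = (\<Sum>J\<in>Gs n. (if J = {Suc n - card J..n} then ?g J else 0))"
  proof (rule sum.mono_neutral_cong_right[OF finite_Gs, symmetric])
    show "?K ` {1..n} \<subseteq> Gs n" by (auto simp: Gs_def)
    show "\<forall>J\<in>Gs n - ?K ` {1..n}. (if J = {Suc n - card J..n} then ?g J else 0) = 0"
    proof
      fix J assume J: "J \<in> Gs n - ?K ` {1..n}"
      then have "card J \<in> {1..n}" using Gs_facts[of J n] by auto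
      then show "(if J = {Suc n - card J..n} then ?g J else 0) = 0" using J by auto
    qed
    fix J assume "J \<in> ?K ` {1..n}"
    then obtain i where i: "i \<in> {1..n}" "J = ?K i" by auto
    then show "(if J = {Suc n - card J..n} then ?g J else 0) = ?g J" using cardK by simp
  qed
  finally show ?thesis by simp
qed

lemma partB2:
  assumes "length ms = n" "1 \<le> i" "i \<le> n"
  shows "(\<Sum>J\<in>{J. J \<in> Gs n \<and> card J < i}. fps_const (C (ms @ [m]) (Suc n) i * alpha m (Suc n) i *
            beta0 beta (map (\<lambda>j. j - int (Suc n - i) + 1) (map int (sorted_list_of_set J)))
              (take i (drop (n - i) (ms @ [m])))) * H (Sub (ms @ [m]) J)) =
         fps_const (C (ms @ [m]) (Suc n) i * alpha m (Suc n) i) * Rest (take i (drop (n - i) (ms @ [m])))"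
proof -
  define d where "d = n - i"
  define sub where "sub = take i (drop d (ms @ [m]))"
  define c where "c = C (ms @ [m]) (Suc n) i * alpha m (Suc n) i"
  have sn: "Suc n - i = d + 1" using assms d_def by simp
  have lsub: "length sub = i" using assms d_def sub_def by simp
  have di: "d + i \<le> length (ms @ [m])" using assms d_def by simp
  let ?Q = "\<lambda>J. fps_const (c * beta0 beta (map (\<lambda>j. j - int (d + 1) + 1) (map int (sorted_list_of_set J))) sub) *
                 H (Sub (ms @ [m]) J)"
  let ?T = "{J. J \<in> Gs n \<and> card J < i}"
  let ?T' = "{J. J \<in> Gs n \<and> card J < i \<and> J \<subseteq> {d+1..n}}"
  have finT: "finite ?T" using finite_Gs by simp
  have "(\<Sum>J\<in>?T. ?Q J) = (\<Sum>J\<in>?T'. ?Q J)"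
  proof (rule sum.mono_neutral_right[OF finT])
    show "?T' \<subseteq> ?T" by auto
    show "\<forall>J\<in>?T - ?T'. ?Q J = 0"
    proof
      fix J assume J: "J \<in> ?T - ?T'"
      note G = Gs_facts[of J n]
      obtain j where j: "j \<in> J" "j \<le> d" using J G by (auto simp: subset_iff not_less_eq_eq)
      have "int j - int (d + 1) + 1 \<in> set (map (\<lambda>j. j - int (d + 1) + 1) (map int (sorted_list_of_set J)))"
        using j J G by auto
      moreover have "int j - int (d + 1) + 1 \<le> 0" using j by simp
      ultimately show "?Q J = 0" unfolding beta0_def by auto
    qed
  qed
  also have "\<dots> = (\<Sum>a\<in>Fam i. fps_const c * (fps_const (Bt sub a) * H (Sub sub a)))"
  proof (rule sym, rule sum.reindex_bij_witness[where i="\<lambda>J. (\<lambda>x. x - d) ` J" and j="\<lambda>J. (\<lambda>x. x + d) ` J"])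
    fix a assume a: "a \<in> Fam i"
    note F = Fam_facts[OF a]
    show "(\<lambda>x. x - d) ` (\<lambda>x. x + d) ` a = a" by (simp add: image_image)
    have ax: "\<And>x. x \<in> a \<Longrightarrow> 1 \<le> x \<and> x \<le> i" using F(1) by auto
    have "(\<lambda>x. x + d) ` a \<subseteq> {1..n}" "(\<lambda>x. x + d) ` a \<subseteq> {d+1..n}"
      using ax assms unfolding d_def by fastforce+
    moreover have "card ((\<lambda>x. x + d) ` a) = card a" by (simp add: card_image)
    ultimately show "(\<lambda>x. x + d) ` a \<in> ?T'" using F by (auto simp: Gs_def)
    have so: "sorted_list_of_set ((\<lambda>x. x + d) ` a) = map (\<lambda>x. x + d) (sorted_list_of_set a)"
      by (rule sorted_shift[OF F(4)])
    have m1: "map (\<lambda>j. j - int (d + 1) + 1) (map int (sorted_list_of_set ((\<lambda>x. x + d) ` a))) =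
              map int (sorted_list_of_set a)"
      unfolding so by simp
    have pos: "\<not> (\<exists>j\<in>set (map int (sorted_list_of_set a)). j \<le> 0)" using F by auto
    have "Sub (ms @ [m]) ((\<lambda>x. x + d) ` a) = Sub sub a"
      unfolding sub_def by (rule Sub_shift[OF F(1) di])
    then show "?Q ((\<lambda>x. x + d) ` a) = fps_const c * (fps_const (Bt sub a) * H (Sub sub a))"
      unfolding m1 beta0_def Bt_def using pos by simp
  next
    fix b assume b: "b \<in> ?T'"
    then have G: "b \<subseteq> {1..n}" "b \<noteq> {}" "card b < i" "b \<subseteq> {d+1..n}" by (auto simp: Gs_def)
    show "(\<lambda>x. x + d) ` (\<lambda>x. x - d) ` b = b"
    proof -
      have "\<And>x. x \<in> b \<Longrightarrow> x - d + d = x" using G by auto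
      then show ?thesis by (force simp: image_image)
    qed
    have inj: "inj_on (\<lambda>x. x - d) b"
      by (rule inj_onI) (use G in force)
    have "(\<lambda>x. x - d) ` b \<subseteq> {1..i}" using G assms d_def by force
    moreover have "card ((\<lambda>x. x - d) ` b) < i" using G card_image[OF inj] by simp
    ultimately show "(\<lambda>x. x - d) ` b \<in> Fam i" using G by (simp add: Fam_def)
  qed
  also have "\<dots> = fps_const c * Rest sub"
    unfolding Rest_def lsub by (simp add: sum_distrib_left)
  finally show ?thesis unfolding c_def sub_def d_def sn[unfolded d_def] by simp
qed


lemma Gs_eq: "Gs n = Fam (Suc n) - {J\<in>Fam (Suc n). Suc n \<in> J}"
proof (rule set_eqI, rule iffI)
  fix J assume J: "J \<in> Gs n"
  note G = Gs_facts[OF J]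
  show "J \<in> Fam (Suc n) - {J\<in>Fam (Suc n). Suc n \<in> J}"
    using G by (auto simp: Fam_def)
next
  fix J assume J: "J \<in> Fam (Suc n) - {J\<in>Fam (Suc n). Suc n \<in> J}"
  then have "J \<subseteq> {1..Suc n}" "Suc n \<notin> J" "J \<noteq> {}" by (auto simp: Fam_def)
  then show "J \<in> Gs n" by (auto simp: Gs_def subset_iff le_Suc_eq)
qed

lemma fps_const_sum': "(\<Sum>x\<in>S. fps_const (f x) :: int fps) = fps_const (\<Sum>x\<in>S. f x)"
  by (induction S rule: infinite_finite_induct) simp_all

lemma fps_const_sum: "fps_const (\<Sum>x\<in>S. f x) = (\<Sum>x\<in>S. fps_const (f x) :: int fps)"
  by (simp add: fps_const_sum')

lemma alg: "fps_const (- (c + (\<Sum>i\<in>I. t i))) * (X :: int fps) =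
            - (fps_const c * X) - (\<Sum>i\<in>I. fps_const (t i) * X)"
proof -
  have "fps_const (- (c + (\<Sum>i\<in>I. t i))) = - (fps_const c + (\<Sum>i\<in>I. fps_const (t i)))"
    by (simp only: fps_const_neg[symmetric] fps_const_add[symmetric] fps_const_sum)
  then show ?thesis
    by (simp only: minus_add_distrib distrib_right sum_distrib_right mult_minus_left diff_conv_add_uminus)
qed

lemma ifc: "fps_const (if P then a else 0) * (X :: int fps) = (if P then fps_const a * X else 0)"
  by simp

lemma KEY:
  assumes "length ms = n"
  shows "Rest (ms @ [m]) = (\<Sum>J\<in>Fam n. fps_const (Bt ms J) * H (Sub ms J @ [m])) -
     (\<Sum>i=1..n. fps_const (C (ms @ [m]) (Suc n) i * alpha m (Suc n) i) *
        (H (take i (drop (n - i) (ms @ [m]))) + Rest (take i (drop (n - i) (ms @ [m])))))"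
proof -
  let ?ms = "ms @ [m]"
  let ?f = "\<lambda>J. fps_const (Bt ?ms J) * H (Sub ?ms J)"
  let ?A = "{J\<in>Fam (Suc n). Suc n \<in> J}"
  let ?c = "\<lambda>i. C ?ms (Suc n) i * alpha m (Suc n) i"
  let ?sub = "\<lambda>i. take i (drop (n - i) ?ms)"
  let ?P1 = "\<lambda>J. (if J = {Suc n - card J..n} then fps_const (?c (card J)) * H (Sub ?ms J) else 0)"
  let ?Q = "\<lambda>J i. fps_const (?c i * beta0 beta (map (\<lambda>j. j - int (Suc n - i) + 1)
              (map int (sorted_list_of_set J))) (?sub i)) * H (Sub ?ms J)"
  have "Rest ?ms = (\<Sum>J\<in>Fam (Suc n). ?f J)" unfolding Rest_def using assms by simp
  also have "\<dots> = (\<Sum>J\<in>Gs n. ?f J) + (\<Sum>J\<in>?A. ?f J)"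
    unfolding Gs_eq by (rule sum.subset_diff) (auto simp: finite_Fam)
  also have "(\<Sum>J\<in>?A. ?f J) = (\<Sum>J\<in>Fam n. fps_const (Bt ms J) * H (Sub ms J @ [m]))"
    by (rule partA[OF assms])
  also have "(\<Sum>J\<in>Gs n. ?f J) = (\<Sum>J\<in>Gs n. - ?P1 J - (\<Sum>i\<in>{i. i \<in> {1..n} \<and> card J < i}. ?Q J i))"
  proof (rule sum.cong[OF refl])
    fix J assume J: "J \<in> Gs n"
    note G = Gs_facts[OF J]
    have e: "{i. i \<in> {1..n} \<and> card J < i} = {card J + 1..n}" by auto
    show "?f J = - ?P1 J - (\<Sum>i\<in>{i. i \<in> {1..n} \<and> card J < i}. ?Q J i)"
      unfolding e Bt_G[OF G(1) G(2) assms] alg ifc ..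
  qed
  also have "\<dots> = - (\<Sum>J\<in>Gs n. ?P1 J) - (\<Sum>J\<in>Gs n. \<Sum>i\<in>{i. i \<in> {1..n} \<and> card J < i}. ?Q J i)"
    by (simp add: sum_subtractf sum_negf)
  also have "(\<Sum>J\<in>Gs n. ?P1 J) = (\<Sum>i=1..n. fps_const (?c i) * H (?sub i))"
    by (rule partB1[OF assms])
  also have "(\<Sum>J\<in>Gs n. \<Sum>i\<in>{i. i \<in> {1..n} \<and> card J < i}. ?Q J i) =
             (\<Sum>i\<in>{1..n}. \<Sum>J\<in>{J. J \<in> Gs n \<and> card J < i}. ?Q J i)"
    by (rule sum.swap_restrict) (simp_all add: finite_Gs)
  also have "\<dots> = (\<Sum>i\<in>{1..n}. fps_const (?c i) * Rest (?sub i))"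
    by (rule sum.cong[OF refl]) (use partB2[OF assms] in auto)
  finally show ?thesis
    by (simp add: algebra_simps sum.distrib)
qed


lemma main_step:
  assumes IH: "\<And>ls. 1 \<le> length ls \<Longrightarrow> length ls \<le> n \<Longrightarrow> (\<forall>x\<in>set ls. 2 \<le> x) \<Longrightarrow>
                 H ls = fps_const (Lp ls) * h (length ls) - Rest ls"
    and len: "length ms = n" and n1: "n \<ge> 1" and el: "\<forall>x\<in>set (ms @ [m]). 2 \<le> x"
  shows "H (ms @ [m]) = fps_const (Lp (ms @ [m])) * h (Suc n) - Rest (ms @ [m])"
proof -
  let ?ms = "ms @ [m]"
  let ?c = "\<lambda>i. C ?ms (Suc n) i * alpha m (Suc n) i"
  let ?sub = "\<lambda>i. take i (drop (n - i) ?ms)"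
  let ?SA = "\<Sum>J\<in>Fam n. fps_const (Bt ms J) * H (Sub ms J @ [m])"
  let ?SB = "\<Sum>i=1..n. fps_const (?c i) * (H (?sub i) + Rest (?sub i))"
  have m2: "m \<ge> 1" using el by auto
  have Hms: "H ms = fps_const (Lp ms) * h n - Rest ms"
    using IH[of ms] len n1 el by simp
  have S1: "H ?ms = fps_const (Lp ms) * U m (h (Suc n)) - ?SA"
  proof -
    have "geom * H ms = fps_const (Lp ms) * h (Suc n) - (\<Sum>J\<in>Fam n. fps_const (Bt ms J) * (geom * H (Sub ms J)))"
      unfolding Hms Rest_def len h_Suc by (simp add: algebra_simps sum_distrib_left)
    then have "U m (geom * H ms) = fps_const (Lp ms) * U m (h (Suc n)) - ?SA"
      by (simp add: U_diff U_const U_sum H_snoc)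
    then show ?thesis by (simp add: H_snoc)
  qed
  have S2: "U m (h (Suc n)) = fps_const (int m ^ Suc n) * h (Suc n) + (\<Sum>i=1..n. fps_const (alpha m (Suc n) i) * h i)"
    unfolding U_h[OF m2, of "Suc n", simplified] using alpha_spec(2)[of "Suc n" m] by simp
  have S3: "fps_const (Lp ms) * (\<Sum>i=1..n. fps_const (alpha m (Suc n) i) * h i) = ?SB"
    unfolding sum_distrib_left
  proof (rule sum.cong[OF refl])
    fix i assume i: "i \<in> {1..n}"
    have ls: "length (?sub i) = i" using i len by simp
    have "set (?sub i) \<subseteq> set ?ms" by (meson set_drop_subset set_take_subset subset_trans)
    then have "\<forall>x\<in>set (?sub i). 2 \<le> x" using el by blast
    moreover have "1 \<le> length (?sub i)" "length (?sub i) \<le> n" using ls i by auto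
    ultimately have E: "H (?sub i) = fps_const (Lp (?sub i)) * h i - Rest (?sub i)"
      using IH[of "?sub i"] unfolding ls by blast
    have IHi: "fps_const (Lp (?sub i)) * h i = H (?sub i) + Rest (?sub i)"
      by (simp only: E diff_add_cancel)
    have "Lp ms = C ?ms (Suc n) i * Lp (?sub i)" using Lp_split[of i n ms m] i len by simp
    then have P: "fps_const (Lp ms) * (fps_const (alpha m (Suc n) i) * h i) =
               fps_const (?c i) * (fps_const (Lp (?sub i)) * h i)"
      by (simp add: algebra_simps)
    show "fps_const (Lp ms) * (fps_const (alpha m (Suc n) i) * h i) =
               fps_const (?c i) * (H (?sub i) + Rest (?sub i))"
      unfolding IHi[symmetric] by (rule P)
  qed
  have K: "Rest ?ms = ?SA - ?SB" using KEY[OF len, of m] by simp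
  have "H ?ms = fps_const (Lp ms) * (fps_const (int m ^ Suc n) * h (Suc n)) + ?SB - ?SA"
    unfolding S1 S2 distrib_left S3 by simp
  also have "\<dots> = fps_const (Lp ?ms) * h (Suc n) - Rest ?ms"
    unfolding K Lp_snoc len by (simp add: algebra_simps)
  finally show ?thesis .
qed

lemma Fam_1: "Fam 1 = {}"
proof -
  have "J \<notin> Fam 1" for J
  proof
    assume "J \<in> Fam 1"
    note F = Fam_facts[OF this]
    then show False by (simp add: card_gt_0_iff[symmetric])
  qed
  then show ?thesis by blast
qed

lemma main:
  "ms \<noteq> [] \<Longrightarrow> (\<forall>x\<in>set ms. 2 \<le> x) \<Longrightarrow> H ms = fps_const (Lp ms) * h (length ms) - Rest ms"
proof (induction "length ms" arbitrary: ms rule: less_induct)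
  case less
  obtain ms0 m where ms: "ms = ms0 @ [m]" using less.prems(1) by (metis rev_exhaust)
  show ?case
  proof (cases "ms0 = []")
    case True
    have m1: "m \<ge> 1" using less.prems ms by auto
    have "H ms = U m (h 1)" unfolding ms True using H_snoc[of "[]" m] by (simp add: H_Nil h_Suc[symmetric])
    also have "\<dots> = fps_const (int m) * h 1"
      using U_h[OF m1, of 1] alpha_spec(2)[of 1 m] by simp
    finally show ?thesis unfolding ms True Rest_def Lp_def using Fam_1 by (simp add: One_nat_def)
  next
    case False
    have IH: "H ls = fps_const (Lp ls) * h (length ls) - Rest ls"
      if "1 \<le> length ls" "length ls \<le> length ms0" "\<forall>x\<in>set ls. 2 \<le> x" for ls
    proof -
      have "ls \<noteq> []" using that(1) by auto
      then show ?thesis using less.hyps[of ls] that ms by auto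
    qed
    have "H (ms0 @ [m]) = fps_const (Lp (ms0 @ [m])) * h (Suc (length ms0)) - Rest (ms0 @ [m])"
      by (rule main_step[OF IH refl]) (use False less.prems ms in \<open>auto simp: Suc_le_eq\<close>)
    then show ?thesis unfolding ms by simp
  qed
qed


theorem lemma2p5:
  shows "\<exists>\<beta> :: int list \<Rightarrow> nat list \<Rightarrow> int.
    (\<forall>ms :: nat list. ms \<noteq> [] \<and> (\<forall>m\<in>set ms. 2 \<le> m) \<longrightarrow>
       H ms = fps_const (\<Prod>j=1..length ms. int (ms ! (j - 1)) ^ j) * h (length ms)
         - (\<Sum>s=1..length ms - 1. \<Sum>J\<in>{J. J \<subseteq> {1..length ms} \<and> card J = s}.
              fps_const (\<beta> (map int (sorted_list_of_set J)) ms) *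
              H (map (\<lambda>j. ms ! (j - 1)) (sorted_list_of_set J))))
  \<and> (\<forall>(ms :: nat list) (J :: int list).
       2 \<le> length ms \<and> (\<forall>m\<in>set ms. 2 \<le> m) \<and>
       1 \<le> length J \<and> length J \<le> length ms - 1 \<and>
       sorted_wrt (<) J \<and> (\<forall>j\<in>set J. 1 \<le> j \<and> j \<le> int (length ms)) \<longrightarrow>
       (let r = length ms; s = length J in
         (last J = int r \<longrightarrow>
            (2 \<le> s \<longrightarrow> \<beta> J ms = \<beta> (butlast J) (butlast ms)) \<and>
            (s = 1 \<longrightarrow> \<beta> J ms = 0)) \<and>
         (J = [int (r - s)..int r - 1] \<longrightarrow>
            \<beta> J ms = - (C ms r s * alpha (last ms) r s +
              (\<Sum>i=s+1..r-1. C ms r i * alpha (last ms) r i *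
                 beta0 \<beta> [int (i - s + 1)..int i] (take i (drop (r - i - 1) ms))))) \<and>
         (last J \<noteq> int r \<and> J \<noteq> [int (r - s)..int r - 1] \<longrightarrow>
            \<beta> J ms = - (\<Sum>i=s+1..r-1. C ms r i * alpha (last ms) r i *
                 beta0 \<beta> (map (\<lambda>j. j - int (r - i) + 1) J) (take i (drop (r - i - 1) ms))))))"
proof (rule exI[of _ beta], intro conjI allI impI)
  fix ms :: "nat list"
  assume a: "ms \<noteq> [] \<and> (\<forall>m\<in>set ms. 2 \<le> m)"
  have "H ms = fps_const (Lp ms) * h (length ms) - Rest ms"
    using main a by blast
  moreover have "Rest ms = (\<Sum>s=1..length ms - 1. \<Sum>J\<in>{J. J \<subseteq> {1..length ms} \<and> card J = s}.
              fps_const (beta (map int (sorted_list_of_set J)) ms) *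
              H (map (\<lambda>j. ms ! (j - 1)) (sorted_list_of_set J)))"
    unfolding statement_sum Rest_def Bt_def Sub_def ..
  ultimately show "H ms = fps_const (\<Prod>j=1..length ms. int (ms ! (j - 1)) ^ j) * h (length ms)
         - (\<Sum>s=1..length ms - 1. \<Sum>J\<in>{J. J \<subseteq> {1..length ms} \<and> card J = s}.
              fps_const (beta (map int (sorted_list_of_set J)) ms) *
              H (map (\<lambda>j. ms ! (j - 1)) (sorted_list_of_set J)))"
    unfolding Lp_def by simp
next
  fix ms :: "nat list" and J :: "int list"
  assume a: "2 \<le> length ms \<and> (\<forall>m\<in>set ms. 2 \<le> m) \<and>
       1 \<le> length J \<and> length J \<le> length ms - 1 \<and>
       sorted_wrt (<) J \<and> (\<forall>j\<in>set J. 1 \<le> j \<and> j \<le> int (length ms))"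
  let ?r = "length ms" and ?s = "length J"
  have B: "beta J ms = Fstep beta J ms" using beta_unfold a by simp
  have s1: "?s \<ge> 1" "?s \<le> ?r" using a by auto
  have le: "int (?r - ?s) \<le> int ?r - 1" using s1 by (cases J) (auto simp: of_nat_diff)
  have lastU: "last [int (?r - ?s)..int ?r - 1] = int ?r - 1"
    by (simp add: upto_rec2[OF le])
  show "let r = length ms; s = length J in
         (last J = int r \<longrightarrow>
            (2 \<le> s \<longrightarrow> beta J ms = beta (butlast J) (butlast ms)) \<and>
            (s = 1 \<longrightarrow> beta J ms = 0)) \<and>
         (J = [int (r - s)..int r - 1] \<longrightarrow>
            beta J ms = - (C ms r s * alpha (last ms) r s +
              (\<Sum>i=s+1..r-1. C ms r i * alpha (last ms) r i *
                 beta0 beta [int (i - s + 1)..int i] (take i (drop (r - i - 1) ms))))) \<and>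
         (last J \<noteq> int r \<and> J \<noteq> [int (r - s)..int r - 1] \<longrightarrow>
            beta J ms = - (\<Sum>i=s+1..r-1. C ms r i * alpha (last ms) r i *
                 beta0 beta (map (\<lambda>j. j - int (r - i) + 1) J) (take i (drop (r - i - 1) ms))))"
    unfolding Let_def
  proof (intro conjI impI)
    assume "last J = int ?r" "2 \<le> ?s"
    then show "beta J ms = beta (butlast J) (butlast ms)" unfolding B Fstep_def Let_def by simp
  next
    assume "last J = int ?r" "?s = 1"
    then show "beta J ms = 0" unfolding B Fstep_def Let_def by simp
  next
    assume J: "J = [int (?r - ?s)..int ?r - 1]"
    then have "last J \<noteq> int ?r" using lastU by simp
    then show "beta J ms = - (C ms ?r ?s * alpha (last ms) ?r ?s +
              (\<Sum>i=?s+1..?r-1. C ms ?r i * alpha (last ms) ?r i *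
                 beta0 beta [int (i - ?s + 1)..int i] (take i (drop (?r - i - 1) ms))))"
      unfolding B Fstep_def Let_def using J by (simp only: if_False if_True simp_thms)
  next
    assume "last J \<noteq> int ?r \<and> J \<noteq> [int (?r - ?s)..int ?r - 1]"
    then show "beta J ms = - (\<Sum>i=?s+1..?r-1. C ms ?r i * alpha (last ms) ?r i *
                 beta0 beta (map (\<lambda>j. j - int (?r - i) + 1) J) (take i (drop (?r - i - 1) ms)))"
      unfolding B Fstep_def Let_def by (simp only: if_False if_True simp_thms)
  qed
qed

end
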